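(* Let $S$ be a subsemigroup of $(M_n(\mathbb{C}),+)$ such that every pair $(A,B) \in S^2$ has property L. Then the linear subspace $\mathrm{Span}(S)$ of $M_n(\mathbb{C})$ has property L.
   Context: A pair $(A,B) \in M_n(\mathbb{C})^2$ has property L if there exist $n$ linear forms $f_1,\dots,f_n$ on $\mathbb{C}^2$ such that for all $(x,y) \in \mathbb{C}^2$, the characteristic polynomial of $xA+yB$ equals $\prod_{k=1}^n (X - f_k(x,y))$. A linear subspace $V$ of $M_n(\mathbb{C})$ has property L if there exist $n$ linear forms $f_1,\dots,f_n$ on $V$ such that for every $M \in V$, the characteristic polynomial of $M$ equals $\prod_{k=1}^n (X - f_k(M))$. *)

theory Defs
  imports "Jordan_Normal_Form.Char_Poly"
begin

text \<open>Property L for a pair (A,B) of n x n complex matrices: there are n linear forms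
  f_k(x,y) = a_k x + b_k y on C^2 (every C-linear form on C^2 has this shape) such that
  the characteristic polynomial of xA+yB is the product of (X - f_k(x,y)).\<close>
definition pair_property_L :: "nat \<Rightarrow> complex mat \<Rightarrow> complex mat \<Rightarrow> bool" where
  "pair_property_L n A B \<longleftrightarrow>
     (\<exists>a b :: nat \<Rightarrow> complex. \<forall>x y :: complex.
        char_poly (x \<cdot>\<^sub>m A + y \<cdot>\<^sub>m B) = (\<Prod>k<n. [:- (a k * x + b k * y), 1:]))"

inductive_set mat_span :: "nat \<Rightarrow> complex mat set \<Rightarrow> complex mat set" for n S where
  zero: "0\<^sub>m n n \<in> mat_span n S"
| base: "A \<in> S \<Longrightarrow> A \<in> mat_span n S"
| add: "A \<in> mat_span n S \<Longrightarrow> B \<in> mat_span n S \<Longrightarrow> A + B \<in> mat_span n S"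
| smult: "A \<in> mat_span n S \<Longrightarrow> c \<cdot>\<^sub>m A \<in> mat_span n S"

definition linear_form_on :: "complex mat set \<Rightarrow> (complex mat \<Rightarrow> complex) \<Rightarrow> bool" where
  "linear_form_on V f \<longleftrightarrow>
     (\<forall>A\<in>V. \<forall>B\<in>V. f (A + B) = f A + f B) \<and> (\<forall>A\<in>V. \<forall>c. f (c \<cdot>\<^sub>m A) = c * f A)"

definition subspace_property_L :: "nat \<Rightarrow> complex mat set \<Rightarrow> bool" where
  "subspace_property_L n V \<longleftrightarrow>
     (\<exists>f :: nat \<Rightarrow> complex mat \<Rightarrow> complex. (\<forall>k<n. linear_form_on V (f k)) \<and>
        (\<forall>M\<in>V. char_poly M = (\<Prod>k<n. [:- f k M, 1:])))"

end

theory Submission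
  imports Defs "HOL-Library.Function_Algebras"
begin


primrec comb :: "nat \<Rightarrow> complex mat list \<Rightarrow> (nat \<Rightarrow> complex) \<Rightarrow> complex mat" where
  "comb n [] x = 0\<^sub>m n n"
| "comb n (A # As) x = x 0 \<cdot>\<^sub>m A + comb n As (\<lambda>i. x (Suc i))"

definition lin :: "(nat \<Rightarrow> complex) \<Rightarrow> nat \<Rightarrow> (nat \<Rightarrow> complex) \<Rightarrow> complex" where
  "lin c m x = (\<Sum>i<m. c i * x i)"

lemma comb_carrier: "set As \<subseteq> carrier_mat n n \<Longrightarrow> comb n As x \<in> carrier_mat n n"
  by (induction As arbitrary: x) auto

lemma comb_zero: "set As \<subseteq> carrier_mat n n \<Longrightarrow> comb n As (\<lambda>_. 0) = 0\<^sub>m n n"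
  by (induction As) auto

lemma comb_diff: "set As \<subseteq> carrier_mat n n \<Longrightarrow> comb n As (\<lambda>i. x i - y i) = comb n As x - comb n As y"
proof (induction As arbitrary: x y)
  case Nil then show ?case by auto
next
  case (Cons A As)
  have A: "A \<in> carrier_mat n n" and As: "set As \<subseteq> carrier_mat n n" using Cons by auto
  have c1: "comb n As (\<lambda>i. x (Suc i)) \<in> carrier_mat n n" "comb n As (\<lambda>i. y (Suc i)) \<in> carrier_mat n n"
    using comb_carrier[OF As] by auto
  have "comb n (A # As) (\<lambda>i. x i - y i) = (x 0 - y 0) \<cdot>\<^sub>m A + (comb n As (\<lambda>i. x (Suc i)) - comb n As (\<lambda>i. y (Suc i)))"
    using Cons.IH[OF As, of "\<lambda>i. x (Suc i)" "\<lambda>i. y (Suc i)"] by simp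
  also have "\<dots> = (x 0 \<cdot>\<^sub>m A + comb n As (\<lambda>i. x (Suc i))) - (y 0 \<cdot>\<^sub>m A + comb n As (\<lambda>i. y (Suc i)))"
    using A c1 by (auto intro!: eq_matI simp: algebra_simps)
  finally show ?case by simp
qed

lemma comb_add: "set As \<subseteq> carrier_mat n n \<Longrightarrow> comb n As (\<lambda>i. x i + y i) = comb n As x + comb n As y"
proof (induction As arbitrary: x y)
  case Nil then show ?case by auto
next
  case (Cons A As)
  have A: "A \<in> carrier_mat n n" and As: "set As \<subseteq> carrier_mat n n" using Cons by auto
  have c1: "comb n As (\<lambda>i. x (Suc i)) \<in> carrier_mat n n" "comb n As (\<lambda>i. y (Suc i)) \<in> carrier_mat n n"
    using comb_carrier[OF As] by auto
  show ?case
    using Cons.IH[OF As, of "\<lambda>i. x (Suc i)" "\<lambda>i. y (Suc i)"] A c1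
    by (auto intro!: eq_matI simp: algebra_simps)
qed

lemma comb_smult: "set As \<subseteq> carrier_mat n n \<Longrightarrow> comb n As (\<lambda>i. c * x i) = c \<cdot>\<^sub>m comb n As x"
proof (induction As arbitrary: x)
  case Nil then show ?case by auto
next
  case (Cons A As)
  have A: "A \<in> carrier_mat n n" and As: "set As \<subseteq> carrier_mat n n" using Cons by auto
  have c1: "comb n As (\<lambda>i. x (Suc i)) \<in> carrier_mat n n"
    using comb_carrier[OF As] by auto
  show ?case
    using Cons.IH[OF As, of "\<lambda>i. x (Suc i)"] A c1
    by (auto intro!: eq_matI simp: algebra_simps)
qed

lemma lin_diff: "lin c m (\<lambda>i. x i - y i) = lin c m x - lin c m y"
  unfolding lin_def by (simp add: algebra_simps sum_subtractf)
lemma lin_add: "lin c m (\<lambda>i. x i + y i) = lin c m x + lin c m y"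
  unfolding lin_def by (simp add: algebra_simps sum.distrib)
lemma lin_smult: "lin c m (\<lambda>i. a * x i) = a * lin c m x"
  unfolding lin_def by (simp add: algebra_simps sum_distrib_left)
lemma lin_Suc: "lin c (Suc m) x = c 0 * x 0 + lin (\<lambda>i. c (Suc i)) m (\<lambda>i. x (Suc i))"
  unfolding lin_def by (rule sum.lessThan_Suc_shift)

lemma char_poly_polyfun:
  fixes M N :: "complex mat"
  assumes M: "M \<in> carrier_mat n n" and N: "N \<in> carrier_mat n n"
  shows "\<exists>p. \<forall>t. poly (char_poly (M + t \<cdot>\<^sub>m N)) z = poly p t"
proof -
  define B where "B = mat n n (\<lambda>(i,j). [: (if i = j then z else 0) - M $$ (i,j), - N $$ (i,j) :])"
  have "poly (char_poly (M + t \<cdot>\<^sub>m N)) z = poly (det B) t" for t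
  proof -
    have MN: "M + t \<cdot>\<^sub>m N \<in> carrier_mat n n" using M N by auto
    have "poly (char_poly (M + t \<cdot>\<^sub>m N)) z = det (- (char_matrix (M + t \<cdot>\<^sub>m N) z))"
      by (rule char_poly_matrix[OF MN])
    also have "\<dots> = poly (det B) t"
      by (rule poly_det_cong[of _ n, symmetric], insert M N, auto simp: B_def char_matrix_def)
    finally show ?thesis .
  qed
  then show ?thesis by blast
qed

lemma prod_polyfun:
  fixes z :: complex shows "\<exists>p. \<forall>t. poly (\<Prod>k<n. [:- (\<alpha> k + \<beta> k * t), 1:]) z = poly p t"
proof -
  have "poly (\<Prod>k<n. [:- (\<alpha> k + \<beta> k * t), 1:]) z = poly (\<Prod>k<n. [: z - \<alpha> k, - \<beta> k:]) t" for t
    by (simp add: poly_prod algebra_simps)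
  then show ?thesis by blast
qed

lemma poly_zero_on_infinite:
  fixes p :: "complex poly"
  assumes "infinite A" "\<forall>t\<in>A. poly p t = 0"
  shows "poly p t = 0"
proof -
  have "p = 0"
  proof (rule ccontr)
    assume "p \<noteq> 0"
    then have "finite {x. poly p x = 0}" by (rule poly_roots_finite)
    moreover have "A \<subseteq> {x. poly p x = 0}" using assms by auto
    ultimately show False using assms(1) finite_subset by blast
  qed
  then show ?thesis by simp
qed



lemma prod_root:
  fixes a :: "nat \<Rightarrow> complex"
  assumes "poly (\<Prod>k<n. [:- a k, 1:]) z = 0" shows "\<exists>k<n. z = a k"
  using assms by (auto simp: poly_prod)

lemma sep:
  fixes v :: "nat \<Rightarrow> complex" and l :: "nat \<Rightarrow> nat \<Rightarrow> complex"
  assumes h: "\<forall>w. \<exists>j<n. lin v m w = lin (l j) m w"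
  shows "\<exists>j<n. \<forall>i<m. v i = l j i"
proof (rule ccontr)
  assume "\<not> ?thesis"
  then have nz: "\<forall>j<n. \<exists>i<m. v i \<noteq> l j i" by auto
  define p where "p j = (\<Sum>i<m. monom (v i - l j i) i)" for j
  have pev: "poly (p j) t = lin v m (\<lambda>i. t ^ i) - lin (l j) m (\<lambda>i. t ^ i)" for j t
    unfolding p_def lin_def by (simp add: poly_sum poly_monom algebra_simps sum_subtractf)
  have pnz: "p j \<noteq> 0" if jn: "j < n" for j
  proof -
    obtain i where i: "i < m" "v i \<noteq> l j i" using nz jn by blast
    have "coeff (p j) i = (\<Sum>k<m. if k = i then v k - l j k else 0)"
      unfolding p_def by (simp add: coeff_sum coeff_monom)
    also have "\<dots> = v i - l j i" using i by (simp add: sum.delta)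
    finally show ?thesis using i by auto
  qed
  have fin: "finite (\<Union>j<n. {t. poly (p j) t = 0})"
    using pnz poly_roots_finite by auto
  have "infinite (UNIV :: complex set)" by (rule infinite_UNIV_char_0)
  then obtain t where t: "t \<notin> (\<Union>j<n. {t. poly (p j) t = 0})"
    using fin by (metis UNIV_I ex_new_if_finite)
  obtain j where "j < n" "lin v m (\<lambda>i. t ^ i) = lin (l j) m (\<lambda>i. t ^ i)" using h by blast
  then have "poly (p j) t = 0" using pev by simp
  then show False using t \<open>j < n\<close> by auto
qed



definition Qp :: "nat \<Rightarrow> complex mat list \<Rightarrow> bool" where
  "Qp n As \<longleftrightarrow> (\<exists>c. \<forall>x. char_poly (comb n As x) = (\<Prod>k<n. [:- lin (c k) (length As) x, 1:]))"

lemma extend_lemma: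
  fixes B D C :: "complex mat" and Cs :: "nat set" and al be l :: "nat \<Rightarrow> complex"
  assumes B: "B \<in> carrier_mat n n" and D: "D \<in> carrier_mat n n" and C: "C \<in> carrier_mat n n"
    and Cs: "infinite Cs"
    and PL: "\<And>c r. c \<in> Cs \<Longrightarrow> char_poly ((of_nat c * r) \<cdot>\<^sub>m B + (r \<cdot>\<^sub>m D + C)) =
           (\<Prod>k<n. [:- (al k * (of_nat c * r) + be k * r + l k), 1:])"
  shows "char_poly (s \<cdot>\<^sub>m B + (r \<cdot>\<^sub>m D + C)) = (\<Prod>k<n. [:- (al k * s + be k * r + l k), 1:])"
proof -
  have step1: "poly (char_poly (s \<cdot>\<^sub>m B + (r \<cdot>\<^sub>m D + C))) z = poly (\<Prod>k<n. [:- (al k * s + be k * r + l k), 1:]) z"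
    if r0: "r \<noteq> 0" for s r z
  proof -
    have M: "r \<cdot>\<^sub>m D + C \<in> carrier_mat n n" using D C by auto
    obtain p1 where p1: "\<forall>t. poly (char_poly ((r \<cdot>\<^sub>m D + C) + t \<cdot>\<^sub>m B)) z = poly p1 t"
      using char_poly_polyfun[OF M B] by blast
    obtain p2 where p2: "\<forall>t. poly (\<Prod>k<n. [:- ((be k * r + l k) + al k * t), 1:]) z = poly p2 t"
      using prod_polyfun[where \<alpha>="\<lambda>k. be k * r + l k" and \<beta>=al] by blast
    have e1: "t \<cdot>\<^sub>m B + (r \<cdot>\<^sub>m D + C) = (r \<cdot>\<^sub>m D + C) + t \<cdot>\<^sub>m B" for t
      using B M by (simp add: comm_add_mat)
    have e2: "(\<Prod>k<n. [:- (al k * t + be k * r + l k), 1:]) = (\<Prod>k<n. [:- ((be k * r + l k) + al k * t), 1:])" for t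
      by (simp add: algebra_simps)
    have ev: "poly (char_poly (t \<cdot>\<^sub>m B + (r \<cdot>\<^sub>m D + C))) z - poly (\<Prod>k<n. [:- (al k * t + be k * r + l k), 1:]) z
        = poly (p1 - p2) t" for t
      using p1 p2 e1 e2 by simp
    have inf: "infinite ((\<lambda>c. of_nat c * r) ` Cs)"
    proof
      assume "finite ((\<lambda>c. of_nat c * r) ` Cs)"
      moreover have "inj_on (\<lambda>c. of_nat c * r) Cs" using r0 by (auto simp: inj_on_def)
      ultimately show False using Cs finite_imageD by blast
    qed
    have "\<forall>t\<in>(\<lambda>c. of_nat c * r) ` Cs. poly (p1 - p2) t = 0"
    proof
      fix t assume "t \<in> (\<lambda>c. of_nat c * r) ` Cs"
      then obtain c where "c \<in> Cs" "t = of_nat c * r" by auto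
      then show "poly (p1 - p2) t = 0" using PL[of c r] ev[of t] by simp
    qed
    then have "poly (p1 - p2) s = 0" using poly_zero_on_infinite[OF inf] by blast
    then show ?thesis using ev[of s] by simp
  qed
  have "poly (char_poly (s \<cdot>\<^sub>m B + (r \<cdot>\<^sub>m D + C))) z = poly (\<Prod>k<n. [:- (al k * s + be k * r + l k), 1:]) z" for z
  proof -
    have M: "s \<cdot>\<^sub>m B + C \<in> carrier_mat n n" using B C by auto
    obtain p1 where p1: "\<forall>t. poly (char_poly ((s \<cdot>\<^sub>m B + C) + t \<cdot>\<^sub>m D)) z = poly p1 t"
      using char_poly_polyfun[OF M D] by blast
    obtain p2 where p2: "\<forall>t. poly (\<Prod>k<n. [:- ((al k * s + l k) + be k * t), 1:]) z = poly p2 t"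
      using prod_polyfun[where \<alpha>="\<lambda>k. al k * s + l k" and \<beta>=be] by blast
    have e1: "s \<cdot>\<^sub>m B + (t \<cdot>\<^sub>m D + C) = (s \<cdot>\<^sub>m B + C) + t \<cdot>\<^sub>m D" for t
      using B C D by (auto intro!: eq_matI)
    have e2: "(\<Prod>k<n. [:- (al k * s + be k * t + l k), 1:]) = (\<Prod>k<n. [:- ((al k * s + l k) + be k * t), 1:])" for t
      by (simp add: algebra_simps)
    have ev: "poly (char_poly (s \<cdot>\<^sub>m B + (t \<cdot>\<^sub>m D + C))) z - poly (\<Prod>k<n. [:- (al k * s + be k * t + l k), 1:]) z
        = poly (p1 - p2) t" for t
      using p1 p2 e1 e2 by simp
    have inf: "infinite (UNIV - {0 :: complex})"
      using infinite_UNIV_char_0 by auto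
    have "\<forall>t\<in>UNIV - {0}. poly (p1 - p2) t = 0"
    proof
      fix t :: complex assume "t \<in> UNIV - {0}"
      then show "poly (p1 - p2) t = 0" using step1[of t s z] ev[of t] by simp
    qed
    then have "poly (p1 - p2) r = 0" using poly_zero_on_infinite[OF inf] by blast
    then show ?thesis using ev[of r] by simp
  qed
  then show ?thesis using poly_eq_poly_eq_iff by blast
qed



context
  fixes n :: nat and S :: "complex mat set"
  assumes SC: "S \<subseteq> carrier_mat n n"
    and Sadd: "\<forall>A\<in>S. \<forall>B\<in>S. A + B \<in> S"
    and SL: "\<forall>A\<in>S. \<forall>B\<in>S. pair_property_L n A B"
begin

lemma S_mult: assumes AS: "A \<in> S" and BS: "B \<in> S" and c: "1 \<le> c" shows "A + of_nat c \<cdot>\<^sub>m B \<in> S"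
  using c
proof (induction c rule: nat_induct_at_least)
  case base
  have "A + of_nat 1 \<cdot>\<^sub>m B = A + B" using AS BS SC by auto
  then show ?case using Sadd AS BS by auto
next
  case (Suc c)
  have A: "A \<in> carrier_mat n n" and B: "B \<in> carrier_mat n n" using AS BS SC by auto
  have "A + of_nat (Suc c) \<cdot>\<^sub>m B = (A + of_nat c \<cdot>\<^sub>m B) + B"
    using A B by (auto intro!: eq_matI simp: algebra_simps)
  then show ?case using Sadd Suc BS by auto
qed

lemma Q_single: "A \<in> S \<Longrightarrow> Qp n [A]"
proof -
  assume AS: "A \<in> S"
  then have A: "A \<in> carrier_mat n n" using SC by auto
  obtain a b where ab: "\<forall>x y. char_poly (x \<cdot>\<^sub>m A + y \<cdot>\<^sub>m A) = (\<Prod>k<n. [:- (a k * x + b k * y), 1:])"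
    using SL AS unfolding pair_property_L_def by blast
  show "Qp n [A]" unfolding Qp_def
  proof (intro exI allI)
    fix x :: "nat \<Rightarrow> complex"
    have "comb n [A] x = x 0 \<cdot>\<^sub>m A + 0 \<cdot>\<^sub>m A" using A by (auto intro!: eq_matI)
    then show "char_poly (comb n [A] x) = (\<Prod>k<n. [:- lin (\<lambda>i. a k) (length [A]) x, 1:])"
      using ab[rule_format, of "x 0" 0] by (simp add: lin_def)
  qed
qed

lemma Q_step:
  assumes IH: "\<forall>A\<in>S. Qp n (A # As)" and AsS: "set As \<subseteq> S" and BS: "B \<in> S" and DS: "D \<in> S"
  shows "Qp n (B # D # As)"
proof -
  define m where "m = length As"
  have B: "B \<in> carrier_mat n n" and D: "D \<in> carrier_mat n n" using BS DS SC by auto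
  have AsC: "set As \<subseteq> carrier_mat n n" using AsS SC by auto
  have cdim[simp]: "dim_row (comb n As w) = n" "dim_col (comb n As w) = n" for w
    using comb_carrier[OF AsC, of w] by auto
  define E where "E c = D + of_nat c \<cdot>\<^sub>m B" for c :: nat
  have ES: "1 \<le> c \<Longrightarrow> E c \<in> S" for c using S_mult[OF DS BS] by (simp add: E_def)
  have "\<forall>c. \<exists>cc. 1 \<le> c \<longrightarrow> (\<forall>y. char_poly (comb n (E c # As) y) = (\<Prod>k<n. [:- lin (cc k) (Suc m) y, 1:]))"
    using IH ES unfolding Qp_def m_def by fastforce
  then obtain cf where cf: "\<And>c y. 1 \<le> c \<Longrightarrow> char_poly (comb n (E c # As) y) = (\<Prod>k<n. [:- lin (cf c k) (Suc m) y, 1:])"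
    by metis
  obtain a b where ab: "\<forall>x y. char_poly (x \<cdot>\<^sub>m B + y \<cdot>\<^sub>m D) = (\<Prod>k<n. [:- (a k * x + b k * y), 1:])"
    using SL BS DS unfolding pair_property_L_def by blast
  define l where "l j = (\<lambda>i. cf 1 j (Suc i))" for j
  have Wr: "(\<Prod>k<n. [:- lin (\<lambda>i. cf c k (Suc i)) m w, 1:]) = char_poly (comb n As w)" if c1: "1 \<le> c" for c w
  proof -
    define y where "y = (\<lambda>i. if i = 0 then 0 else w (i - 1))"
    have "comb n (E c # As) y = comb n As w"
      using comb_carrier[OF AsC] B D by (auto simp: y_def E_def intro!: eq_matI)
    moreover have "lin (cf c k) (Suc m) y = lin (\<lambda>i. cf c k (Suc i)) m w" for k
      by (simp add: lin_Suc y_def)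
    ultimately show ?thesis using cf[OF c1, of y] by simp
  qed
  have inl: "\<exists>j<n. \<forall>i<m. cf c k (Suc i) = l j i" if c1: "1 \<le> c" and k: "k < n" for c k
  proof (rule sep, rule allI)
    fix w
    have "poly (\<Prod>k<n. [:- lin (\<lambda>i. cf c k (Suc i)) m w, 1:]) (lin (\<lambda>i. cf c k (Suc i)) m w) = 0"
      using k by (auto simp: poly_prod)
    then have "poly (\<Prod>k<n. [:- lin (l k) m w, 1:]) (lin (\<lambda>i. cf c k (Suc i)) m w) = 0"
      using Wr[OF c1, of w] Wr[of 1 w] by (simp add: l_def)
    then show "\<exists>j<n. lin (\<lambda>i. cf c k (Suc i)) m w = lin (l j) m w"
      using prod_root[of "\<lambda>k. lin (l k) m w"] by blast
  qed
  have inmu: "\<exists>j<n. cf c k 0 = a j * of_nat c + b j" if c1: "1 \<le> c" and k: "k < n" for c k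
  proof -
    define y where "y = (\<lambda>i::nat. if i = 0 then (1::complex) else 0)"
    have "comb n (E c # As) y = of_nat c \<cdot>\<^sub>m B + 1 \<cdot>\<^sub>m D"
      using comb_zero[OF AsC] B D by (auto simp: y_def E_def intro!: eq_matI)
    moreover have "lin (cf c kk) (Suc m) y = cf c kk 0" for kk
      unfolding lin_Suc by (simp add: y_def lin_def)
    ultimately have eq: "(\<Prod>k<n. [:- cf c k 0, 1:]) = (\<Prod>k<n. [:- (a k * of_nat c + b k), 1:])"
      using cf[OF c1, of y] ab[rule_format, of "of_nat c" 1] by simp
    have "poly (\<Prod>k<n. [:- cf c k 0, 1:]) (cf c k 0) = 0" using k by (auto simp: poly_prod)
    then show ?thesis using eq prod_root[of "\<lambda>k. a k * of_nat c + b k"] by auto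
  qed
  define pidx where "pidx c k = (SOME j. j < n \<and> (\<forall>i<m. cf c k (Suc i) = l j i))" for c k
  define jidx where "jidx c k = (SOME j. j < n \<and> cf c k 0 = a j * of_nat c + b j)" for c k
  have pidx: "pidx c k < n \<and> (\<forall>i<m. cf c k (Suc i) = l (pidx c k) i)" if "1 \<le> c" "k < n" for c k
    unfolding pidx_def by (rule someI_ex, rule inl[OF that])
  have jidx: "jidx c k < n \<and> cf c k 0 = a (jidx c k) * of_nat c + b (jidx c k)" if "1 \<le> c" "k < n" for c k
    unfolding jidx_def by (rule someI_ex, rule inmu[OF that])
  define pat where "pat c = restrict (\<lambda>k. (pidx c k, jidx c k)) {..<n}" for c
  have "pat c \<in> (\<Pi>\<^sub>E k\<in>{..<n}. {..<n} \<times> {..<n})" if "1 \<le> c" for c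
    unfolding pat_def restrict_PiE_iff using pidx[OF that] jidx[OF that] by auto
  then have "pat ` {1..} \<subseteq> (\<Pi>\<^sub>E k\<in>{..<n}. {..<n} \<times> {..<n})" by auto
  then have finpat: "finite (pat ` {1..})"
    by (rule finite_subset) (auto intro: finite_PiE)
  have "infinite {1::nat..}" by (simp add: infinite_Ici)
  from pigeonhole_infinite[OF this finpat]
  obtain c0 where c0: "c0 \<in> {1..}" and Csinf: "infinite {c\<in>{1..}. pat c = pat c0}" by blast
  define Cs where "Cs = {c\<in>{1..}. pat c = pat c0}"
  define P where "P k = pidx c0 k" for k
  define J where "J k = jidx c0 k" for k
  have PJ: "pidx c k = P k \<and> jidx c k = J k" if "c \<in> Cs" "k < n" for c k
  proof -
    have "pat c k = pat c0 k" using that by (simp add: Cs_def)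
    then show ?thesis using that by (simp add: pat_def P_def J_def)
  qed
  have PL: "char_poly ((of_nat c * r) \<cdot>\<^sub>m B + (r \<cdot>\<^sub>m D + comb n As w)) =
           (\<Prod>k<n. [:- (a (J k) * (of_nat c * r) + b (J k) * r + lin (l (P k)) m w), 1:])"
    if cC: "c \<in> Cs" for c r w
  proof -
    have c1: "1 \<le> c" using cC by (auto simp: Cs_def)
    define y where "y = (\<lambda>i. if i = 0 then r else w (i - 1))"
    have "comb n (E c # As) y = (of_nat c * r) \<cdot>\<^sub>m B + (r \<cdot>\<^sub>m D + comb n As w)"
      using comb_carrier[OF AsC] B D by (auto simp: y_def E_def intro!: eq_matI simp: algebra_simps)
    moreover have "lin (cf c k) (Suc m) y = a (J k) * (of_nat c * r) + b (J k) * r + lin (l (P k)) m w"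
      if k: "k < n" for k
    proof -
      have "lin (cf c k) (Suc m) y = cf c k 0 * r + lin (\<lambda>i. cf c k (Suc i)) m w"
        by (simp add: lin_Suc y_def)
      also have "lin (\<lambda>i. cf c k (Suc i)) m w = lin (l (P k)) m w"
        using pidx[OF c1 k] PJ[OF cC k] unfolding lin_def by (auto intro!: sum.cong)
      also have "cf c k 0 = a (J k) * of_nat c + b (J k)"
        using jidx[OF c1 k] PJ[OF cC k] by auto
      finally show ?thesis by (simp add: algebra_simps)
    qed
    ultimately show ?thesis using cf[OF c1, of y] by simp
  qed
  have Csi: "infinite Cs" using Csinf by (simp add: Cs_def)
  define cn where "cn k = (\<lambda>i. if i = 0 then a (J k) else if i = 1 then b (J k) else l (P k) (i - 2))" for k
  show ?thesis unfolding Qp_def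
  proof (intro exI allI)
    fix x :: "nat \<Rightarrow> complex"
    define w where "w = (\<lambda>i. x (Suc (Suc i)))"
    have C: "comb n As w \<in> carrier_mat n n" using comb_carrier[OF AsC] .
    have ex: "char_poly (x 0 \<cdot>\<^sub>m B + (x 1 \<cdot>\<^sub>m D + comb n As w)) =
        (\<Prod>k<n. [:- (a (J k) * x 0 + b (J k) * x 1 + lin (l (P k)) m w), 1:])"
      by (rule extend_lemma[OF B D C Csi PL])
    have "lin (cn k) (length (B # D # As)) x = a (J k) * x 0 + b (J k) * x 1 + lin (l (P k)) m w" for k
      by (simp add: m_def lin_Suc cn_def w_def)
    then show "char_poly (comb n (B # D # As) x) = (\<Prod>k<n. [:- lin (cn k) (length (B # D # As)) x, 1:])"
      using ex by (simp add: w_def)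
  qed
qed

lemma Q_all: "set As \<subseteq> S \<Longrightarrow> Qp n As"
proof -
  have gen: "set Bs \<subseteq> S \<Longrightarrow> (\<forall>A\<in>S. Qp n (A # Bs))" for Bs
  proof (induction Bs)
    case Nil then show ?case using Q_single by auto
  next
    case (Cons D As)
    then show ?case using Q_step[of As _ D] by auto
  qed
  moreover have "Qp n []"
  proof -
    have "map ((\<lambda>a::complex. [:- a, 1:]) \<circ> (\<lambda>i. 0\<^sub>m n n $$ (i, i))) [0..<n] = replicate n [:0, 1:]"
      by (simp add: list_eq_iff_nth_eq)
    moreover have "(\<Prod>k<n. [:- lin (\<lambda>i. 0) 0 x, 1:]) = [:0, 1:] ^ n" for x :: "nat \<Rightarrow> complex"
      by (simp add: lin_def)
    moreover have "char_poly (0\<^sub>m n n :: complex mat) = prod_list (map ((\<lambda>a::complex. [:- a, 1:]) \<circ> (\<lambda>i. 0\<^sub>m n n $$ (i, i))) [0..<n])"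
      using char_poly_upper_triangular[of "0\<^sub>m n n" n] by (simp add: diag_mat_def)
    ultimately show ?thesis
      unfolding Qp_def 
      by (intro exI[of _ "\<lambda>k i. 0"]) (simp add: prod_list_replicate)
  qed
  then show "set As \<subseteq> S \<Longrightarrow> Qp n As" using gen by (cases As) auto
qed

end


definition sc :: "complex \<Rightarrow> (nat \<Rightarrow> nat \<Rightarrow> complex) \<Rightarrow> (nat \<Rightarrow> nat \<Rightarrow> complex)" where
  "sc c f = (\<lambda>i j. c * f i j)"

interpretation V: vector_space sc
  by unfold_locales (auto simp: sc_def fun_eq_iff algebra_simps)

lemma sum_fun_apply2: "(\<Sum>x\<in>X. f x) i j = (\<Sum>x\<in>X. f x i j)"
  by (induction X rule: infinite_finite_induct) auto

definition Phi :: "nat \<Rightarrow> complex mat \<Rightarrow> (nat \<Rightarrow> nat \<Rightarrow> complex)" where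
  "Phi n M = (\<lambda>i j. if i < n \<and> j < n then M $$ (i,j) else 0)"

lemma Phi_add: "A \<in> carrier_mat n n \<Longrightarrow> B \<in> carrier_mat n n \<Longrightarrow> Phi n (A + B) = Phi n A + Phi n B"
  by (auto simp: Phi_def fun_eq_iff)
lemma Phi_smult: "A \<in> carrier_mat n n \<Longrightarrow> Phi n (c \<cdot>\<^sub>m A) = sc c (Phi n A)"
  by (auto simp: Phi_def fun_eq_iff sc_def)
lemma Phi_zero: "Phi n (0\<^sub>m n n) = 0"
  by (auto simp: Phi_def fun_eq_iff)
lemma Phi_inj: "A \<in> carrier_mat n n \<Longrightarrow> B \<in> carrier_mat n n \<Longrightarrow> Phi n A = Phi n B \<Longrightarrow> A = B"
  by (rule eq_matI) (auto simp: Phi_def fun_eq_iff, metis)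

lemma Phi_comb: "set As \<subseteq> carrier_mat n n \<Longrightarrow> Phi n (comb n As x) = (\<Sum>i<length As. sc (x i) (Phi n (As ! i)))"
proof (induction As arbitrary: x)
  case Nil then show ?case by (simp add: Phi_zero)
next
  case (Cons A As)
  have A: "A \<in> carrier_mat n n" and As: "set As \<subseteq> carrier_mat n n" using Cons by auto
  have "Phi n (comb n (A # As) x) = sc (x 0) (Phi n A) + Phi n (comb n As (\<lambda>i. x (Suc i)))"
    using A comb_carrier[OF As] by (simp add: Phi_add Phi_smult)
  also have "\<dots> = (\<Sum>i<length (A # As). sc (x i) (Phi n ((A # As) ! i)))"
    unfolding length_Cons sum.lessThan_Suc_shift using Cons.IH[OF As] by simp
  finally show ?case .
qed

definition ee :: "nat \<Rightarrow> nat \<Rightarrow> (nat \<Rightarrow> nat \<Rightarrow> complex)" where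
  "ee p q = (\<lambda>i j. if i = p \<and> j = q then 1 else 0)"

lemma Phi_span: assumes "A \<in> carrier_mat n n"
  shows "Phi n A \<in> V.span ((\<lambda>(p,q). ee p q) ` ({..<n} \<times> {..<n}))"
proof -
  let ?E = "(\<lambda>(p,q). ee p q) ` ({..<n} \<times> {..<n})"
  have "Phi n A = (\<Sum>p<n. \<Sum>q<n. sc (A $$ (p,q)) (ee p q))"
  proof (intro ext)
    fix i j
    have "(\<Sum>p<n. \<Sum>q<n. sc (A $$ (p,q)) (ee p q)) i j = (\<Sum>p<n. \<Sum>q<n. if p = i \<and> q = j then A $$ (p,q) else 0)"
      by (simp add: sum_fun_apply2 sc_def ee_def) (auto intro!: sum.cong)
    also have "\<dots> = (\<Sum>p<n. if p = i then (if i < n \<and> j < n then A $$ (i,j) else 0) else 0)"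
      by (rule sum.cong) (auto simp: sum.delta' if_distrib)
    also have "\<dots> = Phi n A i j"
      by (simp add: sum.delta' Phi_def)
    finally show "Phi n A i j = (\<Sum>p<n. \<Sum>q<n. sc (A $$ (p,q)) (ee p q)) i j" by simp
  qed
  also have "\<dots> \<in> V.span ?E"
    by (intro V.span_sum V.span_scale V.span_base) auto
  finally show ?thesis .
qed



lemma mat_span_carrier: assumes SC: "S \<subseteq> carrier_mat n n" shows "M \<in> mat_span n S \<Longrightarrow> M \<in> carrier_mat n n"
  by (induction M rule: mat_span.induct) (use SC in auto)

lemma Phi_mat_span: assumes SC: "S \<subseteq> carrier_mat n n" shows "M \<in> mat_span n S \<Longrightarrow> Phi n M \<in> V.span (Phi n ` S)"
proof (induction M rule: mat_span.induct)
  case zero then show ?case by (simp only: Phi_zero V.span_zero)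
next
  case (base A) then show ?case by (simp add: V.span_base)
next
  case (add A B)
  have "Phi n (A + B) = Phi n A + Phi n B" using mat_span_carrier[OF SC] add by (intro Phi_add) auto
  then show ?case using add V.span_add by (simp only:)
next
  case (smult A c)
  have "Phi n (c \<cdot>\<^sub>m A) = sc c (Phi n A)" using mat_span_carrier[OF SC] smult by (intro Phi_smult) auto
  then show ?case using smult V.span_scale by (simp only:)
qed

lemma spanning_list:
  assumes SC: "S \<subseteq> carrier_mat n n"
  shows "\<exists>As. set As \<subseteq> S \<and> (\<forall>M\<in>mat_span n S. \<exists>x. comb n As x = M)"
proof -
  let ?E = "(\<lambda>(p,q). ee p q) ` ({..<n} \<times> {..<n})"
  let ?T = "Phi n ` S"
  have finE: "finite ?E" by auto
  have TE: "?T \<subseteq> V.span ?E" using Phi_span SC by auto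
  have bnd: "finite B \<and> card B \<le> card ?E" if "B \<subseteq> ?T" "V.independent B" for B
    using V.independent_span_bound[OF finE that(2)] that(1) TE by auto
  define K where "K = {card B | B. B \<subseteq> ?T \<and> V.independent B}"
  have "K \<subseteq> {..card ?E}" using bnd by (auto simp: K_def)
  then have finK: "finite K" using finite_subset by blast
  have "0 \<in> K" unfolding K_def by (auto intro!: exI[of _ "{}"] simp: V.independent_empty)
  then have "Max K \<in> K" using finK by (intro Max_in) auto
  then obtain Bm where Bm: "Bm \<subseteq> ?T" "V.independent Bm" "card Bm = Max K" by (auto simp: K_def)
  have finBm: "finite Bm" using bnd[OF Bm(1,2)] by auto
  have Tsp: "?T \<subseteq> V.span Bm"
  proof
    fix t assume tT: "t \<in> ?T"
    show "t \<in> V.span Bm"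
    proof (rule ccontr)
      assume nt: "t \<notin> V.span Bm"
      then have "V.independent (insert t Bm)" using V.independent_insertI Bm(2) by blast
      moreover have "insert t Bm \<subseteq> ?T" using tT Bm(1) by auto
      ultimately have "card (insert t Bm) \<in> K" unfolding K_def by blast
      then have "card (insert t Bm) \<le> Max K" using finK by auto
      moreover have "t \<notin> Bm" using nt V.span_base by blast
      ultimately show False using finBm Bm(3) by auto
    qed
  qed
  obtain Sf where Sf: "Sf \<subseteq> S" "Bm = Phi n ` Sf" using Bm(1) subset_image_iff by metis
  have injS: "inj_on (Phi n) S" using Phi_inj SC by (auto simp: inj_on_def)
  have injSf: "inj_on (Phi n) Sf" using inj_on_subset[OF injS Sf(1)] .
  have finSf: "finite Sf" using finBm Sf(2) injSf finite_imageD by blast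
  obtain As where As: "set As = Sf" "distinct As" using finite_distinct_list[OF finSf] by blast
  have AsC: "set As \<subseteq> carrier_mat n n" using As Sf SC by auto
  show ?thesis
  proof (rule exI[of _ As], intro conjI ballI)
    show "set As \<subseteq> S" using As Sf by auto
    fix M assume M: "M \<in> mat_span n S"
    have MC: "M \<in> carrier_mat n n" using mat_span_carrier[OF SC M] .
    have "Phi n M \<in> V.span ?T" using Phi_mat_span[OF SC M] .
    also have "V.span ?T \<subseteq> V.span Bm" using Tsp V.span_mono V.span_span by (metis)
    finally have "Phi n M \<in> V.span Bm" .
    then obtain u where u: "Phi n M = (\<Sum>v\<in>Bm. sc (u v) v)" using V.span_finite[OF finBm] by auto
    also have "\<dots> = (\<Sum>A\<in>Sf. sc (u (Phi n A)) (Phi n A))"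
      unfolding Sf(2) by (rule sum.reindex[OF injSf, unfolded comp_def])
    also have "\<dots> = (\<Sum>A\<leftarrow>As. sc (u (Phi n A)) (Phi n A))"
      using As by (simp add: sum_list_distinct_conv_sum_set)
    also have "\<dots> = (\<Sum>i<length As. sc (u (Phi n (As ! i))) (Phi n (As ! i)))"
      by (simp add: sum_list_sum_nth atLeast0LessThan)
    also have "\<dots> = Phi n (comb n As (\<lambda>i. u (Phi n (As ! i))))"
      using Phi_comb[OF AsC] by simp
    finally have "Phi n M = Phi n (comb n As (\<lambda>i. u (Phi n (As ! i))))" .
    then have "comb n As (\<lambda>i. u (Phi n (As ! i))) = M"
      using Phi_inj[OF MC comb_carrier[OF AsC]] by simp
    then show "\<exists>x. comb n As x = M" by blast
  qed
qed



theorem mainTheorem12: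
  fixes n :: nat and S :: "complex mat set"
  assumes "S \<subseteq> carrier_mat n n"
    and "\<forall>A\<in>S. \<forall>B\<in>S. A + B \<in> S"
    and "\<forall>A\<in>S. \<forall>B\<in>S. pair_property_L n A B"
  shows "subspace_property_L n (mat_span n S)"
proof -
  note SC = assms(1)
  obtain As where AsS: "set As \<subseteq> S" and spanning: "\<forall>M\<in>mat_span n S. \<exists>x. comb n As x = M"
    using spanning_list[OF SC] by blast
  have AsC: "set As \<subseteq> carrier_mat n n" using AsS SC by auto
  define L where "L = length As"
  have "Qp n As" by (rule Q_all[OF assms AsS])
  then obtain c where c0: "\<forall>x. char_poly (comb n As x) = (\<Prod>k<n. [:- lin (c k) (length As) x, 1:])"
    unfolding Qp_def by (elim exE) (rule that)
  have c: "char_poly (comb n As x) = (\<Prod>k<n. [:- lin (c k) L x, 1:])" for x using c0 unfolding L_def by (rule spec)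
  have wd: "lin (c k) L x = lin (c k) L y" if eq: "comb n As x = comb n As y" and k: "k < n" for x y k
  proof -
    have "comb n As (\<lambda>i. x i - y i) = comb n As x - comb n As y" by (rule comb_diff[OF AsC])
    also have "\<dots> = 0\<^sub>m n n" unfolding eq by (rule minus_r_inv_mat[OF comb_carrier[OF AsC]])
    also have "\<dots> = comb n As (\<lambda>_. 0)" by (rule comb_zero[OF AsC, symmetric])
    finally have "comb n As (\<lambda>i. x i - y i) = comb n As (\<lambda>_. 0)" .
    then have "(\<Prod>k<n. [:- lin (c k) L (\<lambda>i. x i - y i), 1:]) = (\<Prod>k<n. [:- lin (c k) L (\<lambda>_. 0), 1:])"
      using c[of "\<lambda>i. x i - y i"] c[of "\<lambda>_. 0"] by simp
    also have "\<dots> = (\<Prod>k<n. [:- (\<lambda>_. 0) k, 1:])" by (simp add: lin_def)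
    finally have pe: "(\<Prod>k<n. [:- lin (c k) L (\<lambda>i. x i - y i), 1:]) = (\<Prod>k<n. [:- (\<lambda>_. 0) k, 1:])" .
    have "poly (\<Prod>k<n. [:- lin (c k) L (\<lambda>i. x i - y i), 1:]) (lin (c k) L (\<lambda>i. x i - y i)) = 0"
      using k by (auto simp: poly_prod)
    then have "poly (\<Prod>k<n. [:- (\<lambda>_. 0) k, 1:]) (lin (c k) L (\<lambda>i. x i - y i)) = 0"
      by (simp only: pe)
    then have "\<exists>kk<n. lin (c k) L (\<lambda>i. x i - y i) = (\<lambda>_. 0) kk"
      by (rule prod_root)
    then show ?thesis using lin_diff by simp
  qed
  define rep where "rep M = (SOME x. comb n As x = M)" for M
  have rep: "comb n As (rep M) = M" if Min: "M \<in> mat_span n S" for M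
  proof -
    obtain x where "comb n As x = M" using spanning Min by blast
    then show ?thesis unfolding rep_def by (rule someI[where P="\<lambda>x. comb n As x = M"])
  qed
  define f where "f k M = lin (c k) L (rep M)" for k M
  show ?thesis unfolding subspace_property_L_def
  proof (intro exI conjI allI impI ballI)
    fix k assume k: "k < n"
    show "linear_form_on (mat_span n S) (f k)" unfolding linear_form_on_def
    proof (intro conjI ballI allI)
      fix A B assume A: "A \<in> mat_span n S" and B: "B \<in> mat_span n S"
      have AB: "A + B \<in> mat_span n S" using A B by (rule mat_span.add)
      have "comb n As (\<lambda>i. rep A i + rep B i) = comb n As (rep A) + comb n As (rep B)"
        by (rule comb_add[OF AsC])
      also have "\<dots> = A + B" by (simp only: rep[OF A] rep[OF B])
      also have "\<dots> = comb n As (rep (A + B))" by (rule rep[OF AB, symmetric])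
      finally have "comb n As (\<lambda>i. rep A i + rep B i) = comb n As (rep (A + B))" .
      then have "lin (c k) L (rep (A + B)) = lin (c k) L (\<lambda>i. rep A i + rep B i)"
        by (rule wd[OF _ k, symmetric])
      then show "f k (A + B) = f k A + f k B" by (simp add: f_def lin_add)
    next
      fix A a assume A: "A \<in> mat_span n S"
      have aA: "a \<cdot>\<^sub>m A \<in> mat_span n S" using A by (rule mat_span.smult)
      have "comb n As (\<lambda>i. a * rep A i) = a \<cdot>\<^sub>m comb n As (rep A)"
        by (rule comb_smult[OF AsC])
      also have "\<dots> = comb n As (rep (a \<cdot>\<^sub>m A))" by (simp only: rep[OF A] rep[OF aA])
      finally have "comb n As (\<lambda>i. a * rep A i) = comb n As (rep (a \<cdot>\<^sub>m A))" .
      then have "lin (c k) L (rep (a \<cdot>\<^sub>m A)) = lin (c k) L (\<lambda>i. a * rep A i)"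
        by (rule wd[OF _ k, symmetric])
      then show "f k (a \<cdot>\<^sub>m A) = a * f k A" by (simp add: f_def lin_smult)
    qed
  next
    fix M assume M: "M \<in> mat_span n S"
    show "char_poly M = (\<Prod>k<n. [:- f k M, 1:])"
      using c[of "rep M"] rep[OF M] by (simp add: f_def)
  qed
qed

end
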